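(* Let $g,h$ be formal letters with $g\not\equiv h$. For every $n\ge1$, every cyclic subword of the iterated commutator word $[g,h]_n$ of length at least four is magic in $g$ and $h$.
   Context: Iterated commutator words in the free group on $g,h$: $[g,h]_1:=gh^{-1}g^{-1}h$, and for $n\ge 2$, $[g,h]_n$ is the reduced form of $g\,[g,h]_{n-1}^{-1}\,g^{-1}\,[g,h]_{n-1}$. A cyclic permutation of a word $a_1\cdots a_n$ is a word $a_k\cdots a_na_1\cdots a_{k-1}$ for some $k\in[n]$. A word $u$ is a cyclic subword of $w$ if $u$ or $u^{-1}$ is a contiguous subword of some cyclic permutation of $w$; a linear subword is a contiguous subword. A word $u$ is magic in $g$ and $h$ if $u$ and $u^{-1}$ together contain at least three of the four words $gh$, $hg$, $g^{-1}h$, $hg^{-1}$ as linear subwords. *)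

theory Defs
  imports Main
begin

text \<open>Letters of the free group: a generator together with a flag;
  flag False = the generator itself, flag True = its inverse.\<close>
type_synonym 'a letter = "'a \<times> bool"
type_synonym 'a word = "'a letter list"

definition gen :: "'a \<Rightarrow> 'a letter" where "gen a = (a, False)"
definition geninv :: "'a \<Rightarrow> 'a letter" where "geninv a = (a, True)"

definition letter_inv :: "'a letter \<Rightarrow> 'a letter" where
  "letter_inv x = (fst x, \<not> snd x)"

definition word_inv :: "'a word \<Rightarrow> 'a word" where
  "word_inv w = rev (map letter_inv w)"

definition reduce :: "'a word \<Rightarrow> 'a word" where
  "reduce w = foldr (\<lambda>x acc. case acc of [] \<Rightarrow> [x]
       | y # ys \<Rightarrow> (if y = letter_inv x then ys else x # acc)) w []"

fun comm :: "'a \<Rightarrow> 'a \<Rightarrow> nat \<Rightarrow> 'a word" where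
  "comm g h 0 = [gen g, geninv h, geninv g, gen h]"
| "comm g h (Suc 0) = [gen g, geninv h, geninv g, gen h]"
| "comm g h (Suc (Suc n)) =
     (let c = comm g h (Suc n) in reduce ([gen g] @ word_inv c @ [geninv g] @ c))"

definition linear_subword :: "'a list \<Rightarrow> 'a list \<Rightarrow> bool" where
  "linear_subword u w \<longleftrightarrow> (\<exists>p s. w = p @ u @ s)"

text \<open>Cyclic permutations a_k..a_n a_1..a_{k-1}, k in [n], are rotate (k-1) w.\<close>
definition cyclic_subword :: "'a word \<Rightarrow> 'a word \<Rightarrow> bool" where
  "cyclic_subword u w \<longleftrightarrow>
     (\<exists>k < length w. linear_subword u (rotate k w) \<or> linear_subword (word_inv u) (rotate k w))"

definition magic :: "'a \<Rightarrow> 'a \<Rightarrow> 'a word \<Rightarrow> bool" where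
  "magic g h u \<longleftrightarrow>
     3 \<le> card {v \<in> {[gen g, gen h], [gen h, gen g], [geninv g, gen h], [gen h, geninv g]}.
                  linear_subword v u \<or> linear_subword v (word_inv u)}"

end

theory Submission
  imports Defs "HOL-Library.Sublist"
begin

lemma linear_subword_eq: "linear_subword = sublist"
  by (auto simp: fun_eq_iff linear_subword_def sublist_def)

definition allw :: "('b list \<Rightarrow> bool) \<Rightarrow> nat \<Rightarrow> 'b list \<Rightarrow> bool" where
  "allw P k w = (\<forall>v. length v = k \<longrightarrow> sublist v w \<longrightarrow> P v)"

lemma allw_Nil: "0 < k \<Longrightarrow> allw P k []"
  by (auto simp: allw_def)

lemma allw_Cons: "0 < k \<Longrightarrow> allw P k (x#xs) \<longleftrightarrow>
   ((k \<le> length (x#xs) \<longrightarrow> P (take k (x#xs))) \<and> allw P k xs)"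
proof -
  have pre: "prefix v (x#xs) \<Longrightarrow> v = take (length v) (x#xs)" for v
    by (metis append_eq_conv_conj prefix_def)
  show ?thesis
    unfolding allw_def sublist_Cons_right
  proof (intro iffI conjI impI allI)
    assume H: "\<forall>v. length v = k \<longrightarrow> prefix v (x # xs) \<or> sublist v xs \<longrightarrow> P v"
    { assume "k \<le> length (x#xs)"
      thus "P (take k (x#xs))" using H by (simp add: take_is_prefix) }
    fix v assume "length v = k" "sublist v xs" thus "P v" using H by blast
  next
    fix v assume H: "(k \<le> length (x # xs) \<longrightarrow> P (take k (x # xs))) \<and>
        (\<forall>v. length v = k \<longrightarrow> sublist v xs \<longrightarrow> P v)" and L: "length v = k"
      and D: "prefix v (x # xs) \<or> sublist v xs"
    thus "P v"
    proof (cases "sublist v xs")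
      case False
      hence "prefix v (x#xs)" using D by blast
      thus ?thesis using pre[of v] H L prefix_length_le by fastforce
    qed blast
  qed
qed

lemma allw_overlap:
  assumes "allw P k (xs@ys)" "allw P k (ys@zs)" "k \<le> Suc (length ys)"
  shows "allw P k (xs@ys@zs)"
  unfolding allw_def
proof (intro allI impI)
  fix v assume v: "length v = k" "sublist v (xs@ys@zs)"
  hence "sublist v ((xs@ys)@zs)" by simp
  then consider "sublist v (xs@ys)" | "sublist v zs"
    | v1 v2 where "v = v1@v2" "suffix v1 (xs@ys)" "prefix v2 zs"
    unfolding sublist_append by blast
  then show "P v"
  proof cases
    case 1 thus ?thesis using assms(1) v by (auto simp: allw_def)
  next
    case 2
    hence "sublist v (ys@zs)" by (meson sublist_append)
    thus ?thesis using assms(2) v by (auto simp: allw_def)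
  next
    case 3
    show ?thesis
    proof (cases "v2 = []")
      case True
      thus ?thesis using 3 assms(1) v by (auto simp: allw_def)
    next
      case False
      hence "length v1 \<le> length ys" using 3 v assms(3) by (cases v2) auto
      hence "suffix v1 ys" using 3(2)
        by (metis suffix_append suffix_length_le le_antisym append_eq_append_conv
            length_append le_add2 trans_le_add2 suffix_def)
      then obtain p s where "ys = p @ v1" "zs = v2 @ s" using 3
        by (auto simp: suffix_def prefix_def)
      hence "sublist v (ys@zs)" using 3
        by (metis append.assoc sublist_appendI)
      thus ?thesis using assms(2) v by (auto simp: allw_def)
    qed
  qed
qed


lemma letter_inv_inv[simp]: "letter_inv (letter_inv x) = x"
  by (simp add: letter_inv_def)

lemma word_inv_inv[simp]: "word_inv (word_inv w) = w"
  by (simp add: word_inv_def rev_map comp_def)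

lemma length_word_inv[simp]: "length (word_inv w) = length w"
  by (simp add: word_inv_def)

lemma word_inv_append[simp]: "word_inv (xs @ ys) = word_inv ys @ word_inv xs"
  by (simp add: word_inv_def)

lemma word_inv_Cons: "word_inv (x # xs) = word_inv xs @ [letter_inv x]"
  by (simp add: word_inv_def)

lemma sublist_word_inv: "sublist v w \<Longrightarrow> sublist (word_inv v) (word_inv w)"
  unfolding word_inv_def by (simp add: map_mono_sublist)

lemma allw_inv:
  assumes "allw P k w" "\<And>v. P (word_inv v) = P v"
  shows "allw P k (word_inv w)"
  unfolding allw_def
proof (intro allI impI)
  fix v assume "length v = k" "sublist v (word_inv w)"
  hence "length (word_inv v) = k" "sublist (word_inv v) w"
    using sublist_word_inv[of v "word_inv w"] by auto
  hence "P (word_inv v)" using assms(1) by (auto simp: allw_def)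
  thus "P v" using assms(2) by simp
qed

lemma allw_mono: "allw P k w \<Longrightarrow> sublist v w \<Longrightarrow> allw P k v"
  unfolding allw_def using sublist_order.order_trans by blast

lemma magic_inv: "magic g h (word_inv u) = magic g h u"
  unfolding magic_def by (simp add: disj_commute)

lemma magic_mono:
  assumes "sublist v u" "magic g h v"
  shows "magic g h u"
proof -
  let ?S = "{[gen g, gen h], [gen h, gen g], [geninv g, gen h], [gen h, geninv g]}"
  have "{x \<in> ?S. linear_subword x v \<or> linear_subword x (word_inv v)}
      \<subseteq> {x \<in> ?S. linear_subword x u \<or> linear_subword x (word_inv u)}"
    using assms(1) sublist_word_inv[OF assms(1)] unfolding linear_subword_eq
    by (auto intro: sublist_order.order_trans)
  hence "card {x \<in> ?S. linear_subword x v \<or> linear_subword x (word_inv v)}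
      \<le> card {x \<in> ?S. linear_subword x u \<or> linear_subword x (word_inv u)}"
    by (intro card_mono) auto
  thus ?thesis using assms(2) unfolding magic_def by linarith
qed

lemma magic_alt:
  assumes "g \<noteq> h"
  shows "magic g h u \<longleftrightarrow> 3 \<le> length (filter (\<lambda>v. sublist v u \<or> sublist v (word_inv u))
     [[gen g, gen h], [gen h, gen g], [geninv g, gen h], [gen h, geninv g]])"
proof -
  let ?L = "[[gen g, gen h], [gen h, gen g], [geninv g, gen h], [gen h, geninv g]]"
  let ?Q = "\<lambda>v. sublist v u \<or> sublist v (word_inv u)"
  have d: "distinct ?L" using assms by (auto simp: gen_def geninv_def)
  have "{v \<in> set ?L. ?Q v} = set (filter ?Q ?L)" by auto
  hence "card {v \<in> set ?L. ?Q v} = length (filter ?Q ?L)"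
    using d by (simp add: distinct_card)
  thus ?thesis unfolding magic_def linear_subword_eq by simp
qed

definition good2 :: "'a word \<Rightarrow> bool" where
  "good2 v = (length v = 2 \<longrightarrow> v!1 \<noteq> letter_inv (v!0))"

lemma good2_inv: "good2 (word_inv v) = good2 v"
proof (cases "length v = 2")
  case True
  then obtain x y where "v = [x,y]"
    by (metis (no_types, opaque_lifting) One_nat_def Suc_length_conv length_0_conv numeral_2_eq_2)
  thus ?thesis by (auto simp: good2_def word_inv_def)
next
  case False thus ?thesis by (simp add: good2_def)
qed

lemma reduce_Cons: "reduce (x#w) = (case reduce w of [] \<Rightarrow> [x]
       | y # ys \<Rightarrow> (if y = letter_inv x then ys else x # y # ys))"
  by (simp add: reduce_def split: list.split)

lemma reduce_append: "reduce (xs @ ys) = foldr (\<lambda>x acc. case acc of [] \<Rightarrow> [x]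
       | y # ys \<Rightarrow> (if y = letter_inv x then ys else x # acc)) xs (reduce ys)"
  by (simp add: reduce_def)

lemma reduce_id: "allw good2 2 w \<Longrightarrow> reduce w = w"
proof (induction w)
  case Nil thus ?case by (simp add: reduce_def)
next
  case (Cons x w)
  hence r: "reduce w = w" by (simp add: allw_Cons)
  show ?case
  proof (cases w)
    case Nil thus ?thesis by (simp add: reduce_def)
  next
    case (Cons y ys)
    hence "y \<noteq> letter_inv x" using Cons.prems by (simp add: allw_Cons good2_def)
    thus ?thesis using r Cons by (simp add: reduce_Cons)
  qed
qed

lemmas cs = gen_def geninv_def letter_inv_def word_inv_def

lemma comm2: "g \<noteq> h \<Longrightarrow> comm g h 2 = [gen g, geninv h, gen g, gen h, geninv g, geninv h, geninv g, gen h]"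
  by (simp add: numeral_2_eq_2 reduce_def cs)

lemma t1: "g \<noteq> h \<Longrightarrow> allw (magic g h) 4 [gen g, geninv h, gen g, gen h, geninv g, geninv h, geninv g, gen h]"
  by (simp add: allw_Cons allw_Nil magic_alt sublist_code cs)

lemma step_allw:
  assumes c: "c = gen g # [geninv h, gen g, gen h] @ mid @ [geninv h, geninv g, gen h]"
   and P: "allw P k c" "\<And>v. P (word_inv v) = P v" and k: "k \<le> 4"
   and b1: "allw P k [gen g, geninv h, gen g, gen h]"
   and b2: "allw P k [geninv g, gen h, geninv g, geninv h, gen g, gen h]"
  shows "allw P k ([gen g] @ word_inv c @ tl c)"
proof -
  let ?T = "[geninv h, gen g, gen h]"
  let ?E = "[geninv g, gen h, geninv g]"
  have ci: "word_inv c = ?T @ word_inv mid @ [geninv h] @ ?E" unfolding c by (simp add: word_inv_Cons cs)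
  have tc: "tl c = ?T @ mid @ [geninv h, geninv g, gen h]" using c by simp
  have aci: "allw P k (?T @ word_inv mid @ [geninv h] @ ?E)" using allw_inv[OF P] ci by simp
  have atc: "allw P k (?T @ mid @ [geninv h, geninv g, gen h])"
    using allw_mono[OF P(1)] tc by (metis sublist_tl)
  have s3: "allw P k (?E @ ?T @ (mid @ [geninv h, geninv g, gen h]))"
    by (rule allw_overlap) (use b2 atc k in simp_all)
  have s2: "allw P k ((?T @ word_inv mid @ [geninv h]) @ ?E @ (?T @ mid @ [geninv h, geninv g, gen h]))"
    by (rule allw_overlap) (use aci s3 k in simp_all)
  have s1: "allw P k ([gen g] @ ?T @ (word_inv mid @ [geninv h] @ ?E @ ?T @ mid @ [geninv h, geninv g, gen h]))"
    by (rule allw_overlap) (use b1 s2 k in simp_all)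
  thus ?thesis using ci tc by simp
qed

lemma inv_comm:
  assumes gh: "g \<noteq> h"
  shows "(\<exists>mid. comm g h (Suc (Suc m)) = gen g # [geninv h, gen g, gen h] @ mid @ [geninv h, geninv g, gen h])
    \<and> allw good2 2 (comm g h (Suc (Suc m))) \<and> allw (magic g h) 4 (comm g h (Suc (Suc m)))"
proof (induction m)
  case 0
  have e: "comm g h (Suc (Suc 0)) = [gen g, geninv h, gen g, gen h, geninv g, geninv h, geninv g, gen h]"
    using comm2[OF gh] by (simp add: numeral_2_eq_2)
  show ?case unfolding e
    using t1[OF gh] gh
    by (auto simp: allw_Cons allw_Nil good2_def cs)
next
  case (Suc m)
  define c where "c = comm g h (Suc (Suc m))"
  obtain mid where c: "c = gen g # [geninv h, gen g, gen h] @ mid @ [geninv h, geninv g, gen h]"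
    using Suc c_def by blast
  have g2: "allw good2 2 c" and m4: "allw (magic g h) 4 c" using Suc c_def by auto
  have n2: "allw good2 2 ([gen g] @ word_inv c @ tl c)"
    by (rule step_allw[OF c g2 good2_inv]) (use gh in \<open>simp_all add: allw_Cons allw_Nil good2_def cs\<close>)
  have n4: "allw (magic g h) 4 ([gen g] @ word_inv c @ tl c)"
    by (rule step_allw[OF c m4 magic_inv]) (use gh in \<open>simp_all add: allw_Cons allw_Nil magic_alt sublist_code cs\<close>)
  have rc: "reduce c = c" by (rule reduce_id[OF g2])
  have rtc: "reduce (tl c) = tl c" by (rule reduce_id[OF allw_mono[OF g2 sublist_tl]])
  have r1: "reduce ([geninv g] @ c) = tl c"
    using rc c by (simp add: reduce_Cons cs)
  have eq: "comm g h (Suc (Suc (Suc m))) = reduce (([gen g] @ word_inv c) @ [geninv g] @ c)"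
    by (simp add: c_def Let_def)
  also have "\<dots> = reduce (([gen g] @ word_inv c) @ tl c)"
    by (simp only: reduce_append[of "[gen g] @ word_inv c"] r1 rtc)
  also have "\<dots> = [gen g] @ word_inv c @ tl c"
    using reduce_id[OF n2] by simp
  finally have E: "comm g h (Suc (Suc (Suc m))) = [gen g] @ word_inv c @ tl c" .
  have S: "[gen g] @ word_inv c @ tl c = gen g # [geninv h, gen g, gen h] @
     (word_inv mid @ [geninv h, geninv g, gen h, geninv g, geninv h, gen g, gen h] @ mid) @ [geninv h, geninv g, gen h]"
    unfolding c by (simp add: word_inv_Cons cs)
  show ?case unfolding E using n2 n4 S by blast
qed

lemma cc_allw:
  assumes gh: "g \<noteq> h" and n: "n \<ge> 1"
  shows "allw (magic g h) 4 (comm g h n @ comm g h n)"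
proof (cases n)
  case 0 thus ?thesis using n by simp
next
  case (Suc n')
  show ?thesis
  proof (cases n')
    case 0
    have e: "comm g h n = [gen g, geninv h, geninv g, gen h]" using Suc 0 by simp
    have "allw (magic g h) 4 [gen g, geninv h, geninv g, gen h, gen g, geninv h, geninv g, gen h]"
      using gh by (simp add: allw_Cons allw_Nil magic_alt sublist_code cs)
    thus ?thesis unfolding e by simp
  next
    case (Suc m)
    define c where "c = comm g h n"
    have cn: "c = comm g h (Suc (Suc m))" using c_def \<open>n = Suc n'\<close> Suc by simp
    obtain mid where c: "c = gen g # [geninv h, gen g, gen h] @ mid @ [geninv h, geninv g, gen h]"
      using inv_comm[OF gh, of m] cn by blast
    have m4: "allw (magic g h) 4 c" using inv_comm[OF gh, of m] cn by blast
    let ?X = "gen g # [geninv h, gen g, gen h] @ mid"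
    let ?Y = "[gen h] @ mid @ [geninv h, geninv g, gen h]"
    have c1: "c = ?X @ [geninv h, geninv g, gen h]" using c by simp
    have c2: "c = [gen g, geninv h, gen g] @ ?Y" using c by simp
    have j: "allw (magic g h) 4 [geninv h, geninv g, gen h, gen g, geninv h, gen g]"
      using gh by (simp add: allw_Cons allw_Nil magic_alt sublist_code cs)
    have s1: "allw (magic g h) 4 ([geninv h, geninv g, gen h] @ [gen g, geninv h, gen g] @ ?Y)"
      by (rule allw_overlap) (use j m4 c2 in simp_all)
    have "allw (magic g h) 4 (?X @ [geninv h, geninv g, gen h] @ ([gen g, geninv h, gen g] @ ?Y))"
      by (rule allw_overlap) (use s1 m4 c1 in simp_all)
    moreover have "c @ c = ?X @ [geninv h, geninv g, gen h] @ ([gen g, geninv h, gen g] @ ?Y)"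
      using c by simp
    ultimately have "allw (magic g h) 4 (c @ c)" by simp
    thus ?thesis using c_def by simp
  qed
qed

lemma rotate_sublist: "sublist (rotate k w) (w @ w)"
proof -
  let ?m = "k mod length w"
  have eq: "w @ w = take ?m w @ (drop ?m w @ take ?m w) @ drop ?m w" by simp
  show ?thesis unfolding rotate_drop_take by (subst eq) (rule sublist_appendI)
qed

theorem lemma3p14:
  fixes g h :: 'a and n :: nat and u :: "'a word"
  assumes "g \<noteq> h" and "n \<ge> 1"
    and "cyclic_subword u (comm g h n)" and "length u \<ge> 4"
  shows "magic g h u"
proof -
  let ?c = "comm g h n"
  have A: "allw (magic g h) 4 (?c @ ?c)" by (rule cc_allw[OF assms(1,2)])
  have key: "magic g h w" if "sublist w (?c @ ?c)" "length w \<ge> 4" for w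
  proof -
    have "sublist (take 4 w) (?c @ ?c)"
      using sublist_take that(1) by (rule sublist_order.order_trans)
    moreover have "length (take 4 w) = 4" using that(2) by simp
    ultimately have "magic g h (take 4 w)" using A unfolding allw_def by blast
    thus ?thesis by (rule magic_mono[OF sublist_take])
  qed
  from assms(3) obtain k where
    "sublist u (rotate k ?c) \<or> sublist (word_inv u) (rotate k ?c)"
    unfolding cyclic_subword_def linear_subword_eq by blast
  thus ?thesis
  proof
    assume "sublist u (rotate k ?c)"
    hence "sublist u (?c @ ?c)" using rotate_sublist by (rule sublist_order.order_trans)
    thus ?thesis using key assms(4) by blast
  next
    assume "sublist (word_inv u) (rotate k ?c)"
    hence "sublist (word_inv u) (?c @ ?c)" using rotate_sublist by (rule sublist_order.order_trans)
    hence "magic g h (word_inv u)" using key assms(4) by simp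
    thus ?thesis by (simp add: magic_inv)
  qed
qed

end
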